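(* Let $w,w'\in[0,1]$ with $w+w'=1$, and let $\textbf{F}$ be a $gH$-differentiable IVF on a nonempty subset $\mathcal{X}$ of $\mathbb{R}^n$. Then \[\lVert\mathcal{W}(\nabla\textbf{F}(x))-\mathcal{W}(\nabla\textbf{F}(y))\rVert\le\lVert\nabla\textbf{F}(x)\ominus_{gH}\nabla\textbf{F}(y)\rVert_{I(\mathbb{R})^n}\quad\text{for all }x,y\in\mathcal{X},\] where the left-hand norm is the Euclidean norm on $\mathbb{R}^n$.
   Context: $I(\mathbb{R})$: closed bounded intervals $\textbf{A}=[\underline{a},\overline{a}]$ with Moore arithmetic ($\oplus$ endpointwise; $\lambda\odot\textbf{A}=[\lambda\underline{a},\lambda\overline{a}]$ if $\lambda\ge0$, $[\lambda\overline{a},\lambda\underline{a}]$ if $\lambda<0$); $\textbf{A}\ominus_{gH}\textbf{B}=[\min\{\underline{a}-\underline{b},\overline{a}-\overline{b}\},\max\{\underline{a}-\underline{b},\overline{a}-\overline{b}\}]$ (componentwise on $I(\mathbb{R})^n$). Norms: $\lVert\textbf{A}\rVert_{I(\mathbb{R})}=\max\{|\underline{a}|,|\overline{a}|\}$; $\lVert(\textbf{A}_1,\dots,\textbf{A}_n)\rVert_{I(\mathbb{R})^n}=\sum_i\lVert\textbf{A}_i\rVert_{I(\mathbb{R})}$. $D_i\textbf{F}(x)=\lim_{h\to0}\frac1h\odot(\textbf{F}(x+he_i)\ominus_{gH}\textbf{F}(x))$, $\nabla\textbf{F}(x)=(D_1\textbf{F}(x),\dots,D_n\textbf{F}(x))^T$.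 Linear IVF: $\textbf{L}(x)=\bigoplus_i x_i\odot\textbf{L}(e_i)$. $\textbf{F}$ is $gH$-differentiable at $\bar{x}$ if there exist a linear IVF $\textbf{L}_{\bar{x}}$, an IVF $\textbf{E}(\textbf{F}(\bar{x});d)$ and $\delta>0$ with $(\textbf{F}(\bar{x}+d)\ominus_{gH}\textbf{F}(\bar{x}))\ominus_{gH}\textbf{L}_{\bar{x}}(d)=\lVert d\rVert\odot\textbf{E}(\textbf{F}(\bar{x});d)$ for $\lVert d\rVert<\delta$ and $\textbf{E}\to\textbf{0}$ as $\lVert d\rVert\to0$. $\mathcal{W}(\textbf{A}_1,\dots,\textbf{A}_n)=(w\underline{a}_1+w'\overline{a}_1,\dots,w\underline{a}_n+w'\overline{a}_n)^T$. *)

theory Defs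
  imports "HOL-Analysis.Analysis"
begin

text \<open>Closed bounded intervals are represented as pairs (lower endpoint, upper endpoint);
  a pair A is a genuine interval iff fst A \<le> snd A.  Moore addition is endpointwise,
  which coincides with the componentwise addition on real \<times> real.\<close>

type_synonym ivl = "real \<times> real"

definition ivl_valid :: "ivl \<Rightarrow> bool" where
  "ivl_valid A \<longleftrightarrow> fst A \<le> snd A"

definition ivl_scale :: "real \<Rightarrow> ivl \<Rightarrow> ivl" where
  "ivl_scale l A = (if l \<ge> 0 then (l * fst A, l * snd A) else (l * snd A, l * fst A))"

definition gH_minus :: "ivl \<Rightarrow> ivl \<Rightarrow> ivl" where
  "gH_minus A B = (min (fst A - fst B) (snd A - snd B), max (fst A - fst B) (snd A - snd B))"

definition ivl_norm :: "ivl \<Rightarrow> real" where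
  "ivl_norm A = max \<bar>fst A\<bar> \<bar>snd A\<bar>"

definition gH_minus_vec :: "ivl ^ 'n \<Rightarrow> ivl ^ 'n \<Rightarrow> ivl ^ 'n" where
  "gH_minus_vec A B = (\<chi> i. gH_minus (A $ i) (B $ i))"

definition ivlvec_norm :: "ivl ^ 'n::finite \<Rightarrow> real" where
  "ivlvec_norm A = (\<Sum>i\<in>UNIV. ivl_norm (A $ i))"

definition gH_partial :: "'n::finite \<Rightarrow> (real ^ 'n \<Rightarrow> ivl) \<Rightarrow> real ^ 'n \<Rightarrow> ivl" where
  "gH_partial i F x =
     Lim (at 0) (\<lambda>h. ivl_scale (1 / h) (gH_minus (F (x + h *\<^sub>R axis i 1)) (F x)))"

definition gH_grad :: "(real ^ 'n::finite \<Rightarrow> ivl) \<Rightarrow> real ^ 'n \<Rightarrow> ivl ^ 'n" where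
  "gH_grad F x = (\<chi> i. gH_partial i F x)"

definition linear_ivf :: "(real ^ 'n::finite \<Rightarrow> ivl) \<Rightarrow> bool" where
  "linear_ivf L \<longleftrightarrow> (\<forall>x. L x = (\<Sum>i\<in>UNIV. ivl_scale (x $ i) (L (axis i 1))))"

definition gH_differentiable_at :: "(real ^ 'n::finite \<Rightarrow> ivl) \<Rightarrow> real ^ 'n \<Rightarrow> bool" where
  "gH_differentiable_at F xb \<longleftrightarrow>
     (\<exists>L E \<delta>. linear_ivf L \<and> \<delta> > 0 \<and>
        (\<forall>d. norm d < \<delta> \<longrightarrow>
           gH_minus (gH_minus (F (xb + d)) (F xb)) (L d) = ivl_scale (norm d) (E d)) \<and>
        (E \<longlongrightarrow> (0, 0)) (at 0))"

definition W_map :: "real \<Rightarrow> real \<Rightarrow> ivl ^ 'n \<Rightarrow> real ^ 'n" where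
  "W_map w w' A = (\<chi> i. w * fst (A $ i) + w' * snd (A $ i))"

end

theory Submission
  imports Defs
begin

lemma aux_scalar:
  fixes w w' p q :: real
  assumes "0 \<le> w" "0 \<le> w'" "w + w' = 1"
  shows "\<bar>w * p + w' * q\<bar> \<le> ivl_norm (min p q, max p q)"
proof -
  have "\<bar>w * p + w' * q\<bar> \<le> w * \<bar>p\<bar> + w' * \<bar>q\<bar>"
    using assms abs_triangle_ineq[of "w * p" "w' * q"] by (simp add: abs_mult)
  also have "\<dots> \<le> w * max \<bar>p\<bar> \<bar>q\<bar> + w' * max \<bar>p\<bar> \<bar>q\<bar>"
    using assms by (intro add_mono mult_left_mono) auto
  also have "\<dots> = max \<bar>p\<bar> \<bar>q\<bar>" using assms by (metis distrib_right mult_1)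
  also have "\<dots> = ivl_norm (min p q, max p q)" unfolding ivl_norm_def by auto
  finally show ?thesis .
qed

lemma aux_vec:
  fixes A B :: "ivl ^ 'n::finite"
  assumes "0 \<le> w" "0 \<le> w'" "w + w' = 1"
  shows "norm (W_map w w' A - W_map w w' B) \<le> ivlvec_norm (gH_minus_vec A B)"
proof -
  have "norm (W_map w w' A - W_map w w' B) \<le> (\<Sum>i\<in>UNIV. \<bar>(W_map w w' A - W_map w w' B) $ i\<bar>)"
    by (rule norm_le_l1_cart)
  also have "\<dots> \<le> (\<Sum>i\<in>UNIV. ivl_norm (gH_minus_vec A B $ i))"
  proof (rule sum_mono)
    fix i
    have "(W_map w w' A - W_map w w' B) $ i
        = w * (fst (A$i) - fst (B$i)) + w' * (snd (A$i) - snd (B$i))"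
      unfolding W_map_def by (simp add: algebra_simps)
    moreover have "gH_minus_vec A B $ i = (min (fst (A$i) - fst (B$i)) (snd (A$i) - snd (B$i)),
        max (fst (A$i) - fst (B$i)) (snd (A$i) - snd (B$i)))"
      unfolding gH_minus_vec_def gH_minus_def by simp
    ultimately show "\<bar>(W_map w w' A - W_map w w' B) $ i\<bar> \<le> ivl_norm (gH_minus_vec A B $ i)"
      using aux_scalar[OF assms] by simp
  qed
  finally show ?thesis unfolding ivlvec_norm_def .
qed

theorem lemma5p3:
  fixes w w' :: real
    and F :: "real ^ 'n::finite \<Rightarrow> ivl"
    and X :: "(real ^ 'n) set"
  assumes "0 \<le> w" "w \<le> 1" "0 \<le> w'" "w' \<le> 1" "w + w' = 1"
    and "X \<noteq> {}"
    and "\<forall>x\<in>X. ivl_valid (F x)"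
    and "\<forall>x\<in>X. gH_differentiable_at F x"
  shows "\<forall>x\<in>X. \<forall>y\<in>X.
           norm (W_map w w' (gH_grad F x) - W_map w w' (gH_grad F y))
             \<le> ivlvec_norm (gH_minus_vec (gH_grad F x) (gH_grad F y))"
  using aux_vec[OF assms(1,3,5)] by blast

end
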